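(* Let $S=\{a,b,c,d,u,v,w,x\}$ be a set of letters and let $R_1=\{uav^{-1},wbv^{-1},udx^{-1},wcx^{-1}\}$, $R_2=\{bvw^{-1},cxw^{-1},avu^{-1},dxu^{-1}\}$, $R_3=\{vbw^{-1},xcw^{-1},uxd^{-1},uva^{-1}\}$, $R_4=\{dxu^{-1},avu^{-1},vwb^{-1},xwc^{-1}\}$, $R_5=\{vua^{-1},vwb^{-1},xwc^{-1},xud^{-1}\}$. For each $i\in\{1,2,3,4,5\}$, let $G_i$ be the group defined by $\langle S\mid R_i\rangle$ (identifying $S$ with its image in $G_i$). Then $\langle S\mid R_i\rangle$ is a restricted triangular presentation of $G_i$, and $S$ satisfies all of conditions (1)–(5) except condition $(i)$, which fails.
   Context: A presentation $\langle S\mid R\rangle$ of a group $G$ (with $S$ identified with a finite generating subset of $G$) is a restricted triangular presentation if: $S\cap S^{-1}=\emptyset$; $R=\{a\cdot b\cdot c^{-1}\mid a,b,c\in S,\ abc^{-1}=e\text{ in }G\}$ and $\langle S\mid R\rangle$ presents $G$; there are no $a,b,c\in S$ with $abc=e$ in $G$; and for $a,b,c\in S$, $abc\in S$ implies $ab\in S$ and $bc\in S$. Conditions (1)–(5) on $S$ (all equalities in $G$, all variables ranging over $S$): (1) If $ua=wb\in S$ and $ud=wc\in S$ with $u\neq w$, $a\neq d$, then there is $k\in S$ with $w=uk$ or $ua=udk$. (2) If $bv=cx\in S$ and $av=dx\in S$ with $v\neq x$, $a\neq b$, then there is $k\in S$ with $v=kx$ or $av=kbv$. (3) If $ux\in S$,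 $uv\in S$, $vb=xc\in S$ with $v\neq x$, then there is $k\in S$ with $k=uvb$ or $v=xk$. (4) If $vw\in S$, $xw\in S$, $dx=av\in S$ with $v\neq x$, then there is $k\in S$ with $k=avw$ or $x=kv$. (5) If $wv,wx,uv,ux\in S$ with $v\neq x$, $u\neq w$, then there is $k\in S$ with $w=ku$ or $x=vk$. *)

theory Defs
  imports Main
begin

text \<open>A word over the alphabet 'a is a list of signed letters: (s, True) is s,
  (s, False) is s^-1.  Two words are equal in the group presented by
  generators UNIV::'a set and relators R iff they are related by the
  congruence generated by free cancellation and insertion/deletion of
  relators.\<close>

type_synonym 'a word = "('a \<times> bool) list"

inductive eqG :: "'a word set \<Rightarrow> 'a word \<Rightarrow> 'a word \<Rightarrow> bool" for R where
  refl: "eqG R w w"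
| sym: "eqG R w w' \<Longrightarrow> eqG R w' w"
| trans: "eqG R w1 w2 \<Longrightarrow> eqG R w2 w3 \<Longrightarrow> eqG R w1 w3"
| cancel: "eqG R (p @ [(s, e), (s, \<not> e)] @ q) (p @ q)"
| rel: "r \<in> R \<Longrightarrow> eqG R (p @ r @ q) (p @ q)"

definition gen :: "'a \<Rightarrow> 'a word" where "gen s = [(s, True)]"
definition ginv :: "'a \<Rightarrow> 'a word" where "ginv s = [(s, False)]"

definition inS :: "'a word set \<Rightarrow> 'a word \<Rightarrow> bool" where
  "inS R w \<longleftrightarrow> (\<exists>s. eqG R w (gen s))"

definition restricted_triangular :: "'a word set \<Rightarrow> bool" where
  "restricted_triangular R \<longleftrightarrow>
     \<comment> \<open>S is identified with a subset of G: distinct letters are distinct elements\<close>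
     (\<forall>s t. eqG R (gen s) (gen t) \<longrightarrow> s = t) \<and>
     \<comment> \<open>S \<inter> S^-1 = {}\<close>
     (\<forall>s t. \<not> eqG R (gen s) (ginv t)) \<and>
     \<comment> \<open>R consists exactly of the words a b c^-1 that are trivial in G\<close>
     R = {gen a @ gen b @ ginv c | a b c. eqG R (gen a @ gen b @ ginv c) []} \<and>
     \<comment> \<open>no a b c = e\<close>
     (\<forall>a b c. \<not> eqG R (gen a @ gen b @ gen c) []) \<and>
     \<comment> \<open>abc \<in> S implies ab \<in> S and bc \<in> S\<close>
     (\<forall>a b c. inS R (gen a @ gen b @ gen c) \<longrightarrow>
        inS R (gen a @ gen b) \<and> inS R (gen b @ gen c))"

definition cond1 :: "'a word set \<Rightarrow> bool" where
  "cond1 R \<longleftrightarrow> (\<forall>u a w b d c.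
     eqG R (gen u @ gen a) (gen w @ gen b) \<and> inS R (gen u @ gen a) \<and>
     eqG R (gen u @ gen d) (gen w @ gen c) \<and> inS R (gen u @ gen d) \<and>
     \<not> eqG R (gen u) (gen w) \<and> \<not> eqG R (gen a) (gen d) \<longrightarrow>
     (\<exists>k. eqG R (gen w) (gen u @ gen k) \<or>
          eqG R (gen u @ gen a) (gen u @ gen d @ gen k)))"

definition cond2 :: "'a word set \<Rightarrow> bool" where
  "cond2 R \<longleftrightarrow> (\<forall>b v c x a d.
     eqG R (gen b @ gen v) (gen c @ gen x) \<and> inS R (gen b @ gen v) \<and>
     eqG R (gen a @ gen v) (gen d @ gen x) \<and> inS R (gen a @ gen v) \<and>
     \<not> eqG R (gen v) (gen x) \<and> \<not> eqG R (gen a) (gen b) \<longrightarrow>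
     (\<exists>k. eqG R (gen v) (gen k @ gen x) \<or>
          eqG R (gen a @ gen v) (gen k @ gen b @ gen v)))"

definition cond3 :: "'a word set \<Rightarrow> bool" where
  "cond3 R \<longleftrightarrow> (\<forall>u x v b c.
     inS R (gen u @ gen x) \<and> inS R (gen u @ gen v) \<and>
     eqG R (gen v @ gen b) (gen x @ gen c) \<and> inS R (gen v @ gen b) \<and>
     \<not> eqG R (gen v) (gen x) \<longrightarrow>
     (\<exists>k. eqG R (gen k) (gen u @ gen v @ gen b) \<or>
          eqG R (gen v) (gen x @ gen k)))"

definition cond4 :: "'a word set \<Rightarrow> bool" where
  "cond4 R \<longleftrightarrow> (\<forall>v w x d a.
     inS R (gen v @ gen w) \<and> inS R (gen x @ gen w) \<and>
     eqG R (gen d @ gen x) (gen a @ gen v) \<and> inS R (gen d @ gen x) \<and>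
     \<not> eqG R (gen v) (gen x) \<longrightarrow>
     (\<exists>k. eqG R (gen k) (gen a @ gen v @ gen w) \<or>
          eqG R (gen x) (gen k @ gen v)))"

definition cond5 :: "'a word set \<Rightarrow> bool" where
  "cond5 R \<longleftrightarrow> (\<forall>w v x u.
     inS R (gen w @ gen v) \<and> inS R (gen w @ gen x) \<and>
     inS R (gen u @ gen v) \<and> inS R (gen u @ gen x) \<and>
     \<not> eqG R (gen v) (gen x) \<and> \<not> eqG R (gen u) (gen w) \<longrightarrow>
     (\<exists>k. eqG R (gen w) (gen k @ gen u) \<or>
          eqG R (gen x) (gen v @ gen k)))"

datatype letter = A | B | C | D | U | V | W | X

definition rel3 :: "'a \<Rightarrow> 'a \<Rightarrow> 'a \<Rightarrow> 'a word" where
  "rel3 p q r = gen p @ gen q @ ginv r"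

definition R1 :: "letter word set" where
  "R1 = {rel3 U A V, rel3 W B V, rel3 U D X, rel3 W C X}"
definition R2 :: "letter word set" where
  "R2 = {rel3 B V W, rel3 C X W, rel3 A V U, rel3 D X U}"
definition R3 :: "letter word set" where
  "R3 = {rel3 V B W, rel3 X C W, rel3 U X D, rel3 U V A}"
definition R4 :: "letter word set" where
  "R4 = {rel3 D X U, rel3 A V U, rel3 V W B, rel3 X W C}"
definition R5 :: "letter word set" where
  "R5 = {rel3 V U A, rel3 V W B, rel3 X W C, rel3 X U D}"

end

theory Submission
  imports Defs
begin


definition rinv :: "'a \<times> bool \<Rightarrow> 'a \<times> bool" where "rinv x = (fst x, \<not> snd x)"

fun rcons :: "'a \<times> bool \<Rightarrow> 'a word \<Rightarrow> 'a word" where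
  "rcons x [] = [x]"
| "rcons x (y#ys) = (if y = rinv x then ys else x#y#ys)"

fun reduced :: "'a word \<Rightarrow> bool" where
  "reduced [] = True"
| "reduced [x] = True"
| "reduced (x#y#ys) = (y \<noteq> rinv x \<and> reduced (y#ys))"

lemma rinv_rinv[simp]: "rinv (rinv x) = x" by (simp add: rinv_def)
lemma rinv_simps[simp]: "rinv (s, True) = (s, False)" "rinv (s, False) = (s, True)"
  by (simp_all add: rinv_def)

lemma reduced_tl: "reduced (y#ys) \<Longrightarrow> reduced ys"
  by (cases ys) auto

lemma reduced_rcons[simp]: "reduced l \<Longrightarrow> reduced (rcons x l)"
proof (cases l)
  case (Cons y ys)
  assume r: "reduced l"
  show ?thesis
  proof (cases "y = rinv x")
    case True then show ?thesis using r Cons by (simp, metis reduced_tl)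
  next
    case False then show ?thesis using r Cons by auto
  qed
qed auto

lemma cancel_gen: "reduced l \<Longrightarrow> rcons x (rcons (rinv x) l) = l"
proof (cases l)
  case (Cons y ys)
  assume r: "reduced l"
  show ?thesis
  proof (cases "y = x")
    case True
    then show ?thesis using r Cons
      by (cases ys) (auto simp: rinv_def)
  next
    case False
    then show ?thesis using Cons by (auto simp: rinv_def)
  qed
qed (auto simp: rinv_def)

lemma cancel_TF[simp]: "reduced l \<Longrightarrow> rcons (s, True) (rcons (s, False) l) = l"
  using cancel_gen[of l "(s,True)"] by simp
lemma cancel_FT[simp]: "reduced l \<Longrightarrow> rcons (s, False) (rcons (s, True) l) = l"
  using cancel_gen[of l "(s,False)"] by simp

definition ev :: "'a word \<Rightarrow> 'a word \<Rightarrow> 'a word" where "ev w l = foldr rcons w l"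
definition winv :: "'a word \<Rightarrow> 'a word" where "winv w = rev (map rinv w)"

lemma ev_append[simp]: "ev (a @ b) l = ev a (ev b l)" by (simp add: ev_def)
lemma ev_Nil[simp]: "ev [] l = l" by (simp add: ev_def)
lemma ev_Cons[simp]: "ev (x # w) l = rcons x (ev w l)" by (simp add: ev_def)
lemma reduced_ev: "reduced l \<Longrightarrow> reduced (ev w l)"
  by (induction w) auto

lemma winv_winv[simp]: "winv (winv w) = w" by (simp add: winv_def rev_map comp_def)
lemma winv_Cons: "winv (y#ys) = winv ys @ [rinv y]" by (simp add: winv_def)

lemma ev_winv1: "reduced l \<Longrightarrow> ev (ys @ winv ys) l = l"
proof (induction ys arbitrary: l)
  case (Cons y ys)
  have "ev ((y#ys) @ winv (y#ys)) l = rcons y (ev (ys @ winv ys) (rcons (rinv y) l))"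
    by (simp add: winv_Cons)
  also have "\<dots> = rcons y (rcons (rinv y) l)" using Cons by simp
  also have "\<dots> = l" using cancel_gen[of l "y"] Cons.prems
    by (metis cancel_gen rinv_rinv)
  finally show ?case .
qed (simp add: winv_def)

lemma ev_winv2: "reduced l \<Longrightarrow> ev (winv ys @ ys) l = l"
  using ev_winv1[of l "winv ys"] by simp

definition Phi1 :: "('a \<Rightarrow> 'b word) \<Rightarrow> 'a \<times> bool \<Rightarrow> 'b word" where
  "Phi1 \<phi> x = (if snd x then \<phi> (fst x) else winv (\<phi> (fst x)))"
definition Phi :: "('a \<Rightarrow> 'b word) \<Rightarrow> 'a word \<Rightarrow> 'b word" where
  "Phi \<phi> w = concat (map (Phi1 \<phi>) w)"

lemma Phi_append[simp]: "Phi \<phi> (a @ b) = Phi \<phi> a @ Phi \<phi> b" by (simp add: Phi_def)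
lemma Phi_simps[simp]: "Phi \<phi> [] = []" "Phi \<phi> (x # w) = Phi1 \<phi> x @ Phi \<phi> w"
  by (simp_all add: Phi_def)

definition nf :: "('a \<Rightarrow> 'b word) \<Rightarrow> 'a word \<Rightarrow> 'b word" where
  "nf \<phi> w = ev (Phi \<phi> w) []"

lemma sound_aux:
  assumes "eqG R w w'" and rel: "\<forall>r\<in>R. \<forall>l. reduced l \<longrightarrow> ev (Phi \<phi> r) l = l"
  shows "\<forall>l. reduced l \<longrightarrow> ev (Phi \<phi> w) l = ev (Phi \<phi> w') l"
  using assms(1)
proof (induction rule: eqG.induct)
  case (cancel p s e q)
  show ?case
  proof (intro allI impI)
    fix l :: "'b word" assume l: "reduced l"
    have rq: "reduced (ev (Phi \<phi> q) l)" using l reduced_ev by blast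
    have "ev (Phi1 \<phi> (s, e) @ Phi1 \<phi> (s, \<not> e)) (ev (Phi \<phi> q) l) = ev (Phi \<phi> q) l"
      using rq ev_winv1 ev_winv2 by (cases e) (auto simp: Phi1_def)
    then show "ev (Phi \<phi> (p @ [(s, e), (s, \<not> e)] @ q)) l = ev (Phi \<phi> (p @ q)) l"
      by simp
  qed
next
  case (rel r p q)
  show ?case
  proof (intro allI impI)
    fix l :: "'b word" assume l: "reduced l"
    have rq: "reduced (ev (Phi \<phi> q) l)" using l reduced_ev by blast
    then have "ev (Phi \<phi> r) (ev (Phi \<phi> q) l) = ev (Phi \<phi> q) l" using rel.hyps assms(2) by blast
    then show "ev (Phi \<phi> (p @ r @ q)) l = ev (Phi \<phi> (p @ q)) l" by simp
  qed
qed auto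

lemma sound:
  assumes "eqG R w w'" and "\<forall>r\<in>R. \<forall>l. reduced l \<longrightarrow> ev (Phi \<phi> r) l = l"
  shows "nf \<phi> w = nf \<phi> w'"
  using sound_aux[OF assms] by (simp add: nf_def)

lemma eqG_cong: "eqG R x y \<Longrightarrow> eqG R (p @ x @ q) (p @ y @ q)"
proof (induction rule: eqG.induct)
  case (cancel p' s e q')
  show ?case using eqG.cancel[of R "p @ p'" s e "q' @ q"] by simp
next
  case (rel r p' q')
  show ?case using eqG.rel[of r R "p @ p'" "q' @ q"] rel by simp
qed (auto intro: eqG.intros)

lemma eqG_congL: "eqG R x y \<Longrightarrow> eqG R (x @ q) (y @ q)"
  using eqG_cong[of R x y "[]" q] by simp
lemma eqG_congR: "eqG R x y \<Longrightarrow> eqG R (p @ x) (p @ y)"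
  using eqG_cong[of R x y p "[]"] by simp

lemma relpos: "rel3 p q r \<in> R \<Longrightarrow> eqG R (gen p @ gen q) (gen r)"
proof -
  assume h: "rel3 p q r \<in> R"
  have 1: "eqG R (gen p @ gen q @ [(r, False), (r, True)]) (gen p @ gen q)"
    using eqG.cancel[of R "gen p @ gen q" r False "[]"] by simp
  have 2: "eqG R (rel3 p q r @ gen r) (gen r)"
    using eqG.rel[OF h, of "[]" "gen r"] by simp
  show ?thesis using 1 2 by (simp add: rel3_def gen_def ginv_def)
    (meson eqG.sym eqG.trans)
qed

lemma ginv_iff: "eqG R (x @ ginv c) [] \<longleftrightarrow> eqG R x (gen c)"
proof
  assume h: "eqG R (x @ ginv c) []"
  have "eqG R (x @ [(c,False),(c,True)]) x"
    using eqG.cancel[of R x c False "[]"] by simp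
  moreover have "eqG R ((x @ ginv c) @ gen c) ([] @ gen c)" using eqG_congL[OF h] .
  ultimately show "eqG R x (gen c)" by (simp add: ginv_def gen_def) (meson eqG.sym eqG.trans)
next
  assume h: "eqG R x (gen c)"
  have "eqG R (x @ ginv c) (gen c @ ginv c)" using eqG_congL[OF h] .
  moreover have "eqG R (gen c @ ginv c) []"
    using eqG.cancel[of R "[]" c True "[]"] by (simp add: gen_def ginv_def)
  ultimately show "eqG R (x @ ginv c) []" by (meson eqG.trans)
qed



definition Q1 :: "('a\<times>'a\<times>'a) set \<Rightarrow> bool" where
 "Q1 T \<longleftrightarrow> (\<forall>u a w b d c s1 s2. (u,a,s1)\<in>T \<and> (w,b,s1)\<in>T \<and> (u,d,s2)\<in>T \<and> (w,c,s2)\<in>T \<and> u\<noteq>w \<and> a\<noteq>d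
    \<longrightarrow> (\<exists>k. (u,k,w)\<in>T \<or> (s2,k,s1)\<in>T))"
definition Q2 :: "('a\<times>'a\<times>'a) set \<Rightarrow> bool" where
 "Q2 T \<longleftrightarrow> (\<forall>b v c x a d s1 s2. (b,v,s1)\<in>T \<and> (c,x,s1)\<in>T \<and> (a,v,s2)\<in>T \<and> (d,x,s2)\<in>T \<and> v\<noteq>x \<and> a\<noteq>b
    \<longrightarrow> (\<exists>k. (k,x,v)\<in>T \<or> (k,s1,s2)\<in>T))"
definition Q3 :: "('a\<times>'a\<times>'a) set \<Rightarrow> bool" where
 "Q3 T \<longleftrightarrow> (\<forall>u x v b c t1 t2 s. (u,x,t1)\<in>T \<and> (u,v,t2)\<in>T \<and> (v,b,s)\<in>T \<and> (x,c,s)\<in>T \<and> v\<noteq>x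
    \<longrightarrow> (\<exists>k. (t2,b,k)\<in>T \<or> (x,k,v)\<in>T))"
definition Q4 :: "('a\<times>'a\<times>'a) set \<Rightarrow> bool" where
 "Q4 T \<longleftrightarrow> (\<forall>v w x d a t1 t2 s. (v,w,t1)\<in>T \<and> (x,w,t2)\<in>T \<and> (d,x,s)\<in>T \<and> (a,v,s)\<in>T \<and> v\<noteq>x
    \<longrightarrow> (\<exists>k. (s,w,k)\<in>T \<or> (k,v,x)\<in>T))"
definition Q5 :: "('a\<times>'a\<times>'a) set \<Rightarrow> bool" where
 "Q5 T \<longleftrightarrow> (\<forall>w v x u t1 t2 t3 t4. (w,v,t1)\<in>T \<and> (w,x,t2)\<in>T \<and> (u,v,t3)\<in>T \<and> (u,x,t4)\<in>T \<and> v\<noteq>x \<and> u\<noteq>w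
    \<longrightarrow> (\<exists>k. (k,u,w)\<in>T \<or> (v,k,x)\<in>T))"

locale grp =
  fixes R :: "'a word set" and T :: "('a\<times>'a\<times>'a) set" and \<phi> :: "'a \<Rightarrow> 'b word"
  assumes Rdef: "R = {rel3 p q r |p q r. (p,q,r)\<in>T}"
  and relok: "\<forall>r\<in>R. \<forall>l. reduced l \<longrightarrow> ev (Phi \<phi> r) l = l"
  and c1: "\<And>p q. nf \<phi> (gen p) = nf \<phi> (gen q) \<Longrightarrow> p = q"
  and c2: "\<And>p q r. nf \<phi> (gen p @ gen q) = nf \<phi> (gen r) \<Longrightarrow> (p,q,r) \<in> T"
  and c3: "\<And>s t. nf \<phi> (gen s) \<noteq> nf \<phi> (ginv t)"
  and c4: "\<And>a b c. nf \<phi> (gen a @ gen b @ gen c) \<noteq> []"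
  and c5: "\<And>a b c s. nf \<phi> (gen a @ gen b @ gen c) \<noteq> nf \<phi> (gen s)"
begin

abbreviation E where "E \<equiv> eqG R"

lemma snd': "E x y \<Longrightarrow> nf \<phi> x = nf \<phi> y" by (rule sound[OF _ relok])

lemma eq1: "E (gen p) (gen q) \<longleftrightarrow> p = q"
proof
  assume "E (gen p) (gen q)" then show "p = q" by (rule c1[OF snd'])
next
  assume "p = q" then show "E (gen p) (gen q)" by (simp add: eqG.refl)
qed

lemma tab: "E (gen p @ gen q) (gen r) \<longleftrightarrow> (p,q,r) \<in> T"
proof
  assume "E (gen p @ gen q) (gen r)" then show "(p,q,r) \<in> T" by (rule c2[OF snd'])
next
  assume "(p,q,r) \<in> T"
  then have "rel3 p q r \<in> R" unfolding Rdef by blast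
  then show "E (gen p @ gen q) (gen r)" by (rule relpos)
qed

lemma tr: "E x y \<Longrightarrow> E y z \<Longrightarrow> E x z" by (rule eqG.trans)
lemma sy: "E x y \<Longrightarrow> E y x" by (rule eqG.sym)

lemma tab': "E (gen r) (gen p @ gen q) \<longleftrightarrow> (p,q,r) \<in> T"
  using tab[of p q r] sy[of "gen r" "gen p @ gen q"] sy[of "gen p @ gen q" "gen r"] by blast

lemma inS2: "inS R (gen p @ gen q) \<longleftrightarrow> (\<exists>r. (p,q,r)\<in>T)"
  unfolding inS_def tab by simp

lemma rr: "E x x' \<Longrightarrow> E y y' \<Longrightarrow> E x y \<longleftrightarrow> E x' y'"
  by (meson tr sy)

lemma rt: "restricted_triangular R"
proof -
  have a: "\<forall>s t. \<not> E (gen s) (ginv t)"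
  proof (intro allI notI)
    fix s t assume "E (gen s) (ginv t)"
    then show False using c3 snd' by blast
  qed
  have b: "\<forall>a b c. \<not> E (gen a @ gen b @ gen c) []"
  proof (intro allI notI)
    fix a b c assume "E (gen a @ gen b @ gen c) []"
    then have "nf \<phi> (gen a @ gen b @ gen c) = nf \<phi> []" by (rule snd')
    then show False using c4 by (simp add: nf_def)
  qed
  have c: "\<forall>a b c. \<not> inS R (gen a @ gen b @ gen c)"
  proof (intro allI notI)
    fix a b c assume "inS R (gen a @ gen b @ gen c)"
    then obtain s where "E (gen a @ gen b @ gen c) (gen s)" unfolding inS_def by blast
    then show False using snd' c5 by blast
  qed
  have e: "E (gen a @ gen b @ ginv c) [] \<longleftrightarrow> (a,b,c) \<in> T" for a b c
    using ginv_iff[of R "gen a @ gen b" c] tab[of a b c] by simp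
  have d: "R = {gen a @ gen b @ ginv c | a b c. E (gen a @ gen b @ ginv c) []}"
    unfolding e by (subst Rdef) (simp add: rel3_def)
  have f: "\<forall>s t. E (gen s) (gen t) \<longrightarrow> s = t" using eq1 by blast
  have g: "\<forall>a b c. inS R (gen a @ gen b @ gen c) \<longrightarrow>
        inS R (gen a @ gen b) \<and> inS R (gen b @ gen c)" using c by blast
  show ?thesis unfolding restricted_triangular_def using a b d f g by blast
qed

lemma C1: "cond1 R \<longleftrightarrow> Q1 T"
proof
  assume h: "cond1 R"
  show "Q1 T" unfolding Q1_def
  proof (intro allI impI)
    fix u a w b d c s1 s2
    assume H: "(u,a,s1)\<in>T \<and> (w,b,s1)\<in>T \<and> (u,d,s2)\<in>T \<and> (w,c,s2)\<in>T \<and> u\<noteq>w \<and> a\<noteq>d"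
    have e1: "E (gen u @ gen a) (gen s1)" "E (gen w @ gen b) (gen s1)"
      "E (gen u @ gen d) (gen s2)" "E (gen w @ gen c) (gen s2)" using H tab by auto
    have hyp: "E (gen u @ gen a) (gen w @ gen b) \<and> inS R (gen u @ gen a) \<and>
     E (gen u @ gen d) (gen w @ gen c) \<and> inS R (gen u @ gen d) \<and>
     \<not> E (gen u) (gen w) \<and> \<not> E (gen a) (gen d)"
      using H tr[OF e1(1) sy[OF e1(2)]] tr[OF e1(3) sy[OF e1(4)]] by (auto simp: eq1 inS2)
    obtain k where k: "E (gen w) (gen u @ gen k) \<or> E (gen u @ gen a) (gen u @ gen d @ gen k)"
      using h[unfolded cond1_def, rule_format, OF hyp] by blast
    have i: "E (gen u @ gen a) (gen u @ gen d @ gen k) \<longleftrightarrow> E (gen s1) (gen s2 @ gen k)"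
      by (rule rr[OF e1(1) eqG_congL[OF e1(3), of "gen k", simplified]])
    show "\<exists>k. (u,k,w)\<in>T \<or> (s2,k,s1)\<in>T" using k unfolding i tab' by blast
  qed
next
  assume h: "Q1 T"
  show "cond1 R" unfolding cond1_def
  proof (intro allI impI)
    fix u a w d b c
    assume H: "E (gen u @ gen a) (gen w @ gen b) \<and> inS R (gen u @ gen a) \<and>
     E (gen u @ gen d) (gen w @ gen c) \<and> inS R (gen u @ gen d) \<and>
     \<not> E (gen u) (gen w) \<and> \<not> E (gen a) (gen d)"
    obtain s1 where T1: "(u,a,s1)\<in>T" using H inS2 by blast
    obtain s2 where T2: "(u,d,s2)\<in>T" using H inS2 by blast
    have e1: "E (gen u @ gen a) (gen s1)" using T1 tab by blast
    have e2: "E (gen u @ gen d) (gen s2)" using T2 tab by blast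
    have T3: "(w,b,s1)\<in>T" using tr[OF sy[OF conjunct1[OF H]] e1] tab by blast
    have T4: "(w,c,s2)\<in>T" using tr[OF sy[of "gen u @ gen d"] e2] H tab by blast
    have "u \<noteq> w" "a \<noteq> d" using H eq1 by auto
    then obtain k where k: "(u,k,w)\<in>T \<or> (s2,k,s1)\<in>T"
      using h[unfolded Q1_def, rule_format, of u a s1 w b d s2 c] T1 T2 T3 T4 by blast
    have i: "E (gen u @ gen a) (gen u @ gen d @ gen k) \<longleftrightarrow> E (gen s1) (gen s2 @ gen k)"
      by (rule rr[OF e1 eqG_congL[OF e2, of "gen k", simplified]])
    show "\<exists>k. E (gen w) (gen u @ gen k) \<or> E (gen u @ gen a) (gen u @ gen d @ gen k)"
      using k by (intro exI[of _ k]) (simp add: i tab')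
  qed
qed

lemma C2: "cond2 R \<longleftrightarrow> Q2 T"
proof
  assume h: "cond2 R"
  show "Q2 T" unfolding Q2_def
  proof (intro allI impI)
    fix b v c x a d s1 s2
    assume H: "(b,v,s1)\<in>T \<and> (c,x,s1)\<in>T \<and> (a,v,s2)\<in>T \<and> (d,x,s2)\<in>T \<and> v\<noteq>x \<and> a\<noteq>b"
    have e1: "E (gen b @ gen v) (gen s1)" "E (gen c @ gen x) (gen s1)"
      "E (gen a @ gen v) (gen s2)" "E (gen d @ gen x) (gen s2)" using H tab by auto
    have hyp: "E (gen b @ gen v) (gen c @ gen x) \<and> inS R (gen b @ gen v) \<and>
     E (gen a @ gen v) (gen d @ gen x) \<and> inS R (gen a @ gen v) \<and>
     \<not> E (gen v) (gen x) \<and> \<not> E (gen a) (gen b)"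
      using H tr[OF e1(1) sy[OF e1(2)]] tr[OF e1(3) sy[OF e1(4)]] by (auto simp: eq1 inS2)
    obtain k where k: "E (gen v) (gen k @ gen x) \<or> E (gen a @ gen v) (gen k @ gen b @ gen v)"
      using h[unfolded cond2_def, rule_format, OF hyp] by blast
    have i: "E (gen a @ gen v) (gen k @ gen b @ gen v) \<longleftrightarrow> E (gen s2) (gen k @ gen s1)"
      by (rule rr[OF e1(3) eqG_congR[OF e1(1), of "gen k"]])
    show "\<exists>k. (k,x,v)\<in>T \<or> (k,s1,s2)\<in>T" using k unfolding i tab' by blast
  qed
next
  assume h: "Q2 T"
  show "cond2 R" unfolding cond2_def
  proof (intro allI impI)
    fix b v c x a d
    assume H: "E (gen b @ gen v) (gen c @ gen x) \<and> inS R (gen b @ gen v) \<and>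
     E (gen a @ gen v) (gen d @ gen x) \<and> inS R (gen a @ gen v) \<and>
     \<not> E (gen v) (gen x) \<and> \<not> E (gen a) (gen b)"
    obtain s1 where T1: "(b,v,s1)\<in>T" using H inS2 by blast
    obtain s2 where T2: "(a,v,s2)\<in>T" using H inS2 by blast
    have e1: "E (gen b @ gen v) (gen s1)" using T1 tab by blast
    have e2: "E (gen a @ gen v) (gen s2)" using T2 tab by blast
    have T3: "(c,x,s1)\<in>T" using tr[OF sy[OF conjunct1[OF H]] e1] tab by blast
    have T4: "(d,x,s2)\<in>T" using tr[OF sy[of "gen a @ gen v"] e2] H tab by blast
    have "v \<noteq> x" "a \<noteq> b" using H eq1 by auto
    then obtain k where k: "(k,x,v)\<in>T \<or> (k,s1,s2)\<in>T"
      using h[unfolded Q2_def, rule_format, of b v s1 c x a s2 d] T1 T2 T3 T4 by blast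
    have i: "E (gen a @ gen v) (gen k @ gen b @ gen v) \<longleftrightarrow> E (gen s2) (gen k @ gen s1)"
      by (rule rr[OF e2 eqG_congR[OF e1, of "gen k"]])
    show "\<exists>k. E (gen v) (gen k @ gen x) \<or> E (gen a @ gen v) (gen k @ gen b @ gen v)"
      using k by (intro exI[of _ k]) (simp add: i tab')
  qed
qed

lemma C3: "cond3 R \<longleftrightarrow> Q3 T"
proof
  assume h: "cond3 R"
  show "Q3 T" unfolding Q3_def
  proof (intro allI impI)
    fix u x v b c t1 t2 s
    assume H: "(u,x,t1)\<in>T \<and> (u,v,t2)\<in>T \<and> (v,b,s)\<in>T \<and> (x,c,s)\<in>T \<and> v\<noteq>x"
    have e1: "E (gen u @ gen v) (gen t2)" "E (gen v @ gen b) (gen s)" "E (gen x @ gen c) (gen s)"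
      using H tab by auto
    have hyp: "inS R (gen u @ gen x) \<and> inS R (gen u @ gen v) \<and>
     E (gen v @ gen b) (gen x @ gen c) \<and> inS R (gen v @ gen b) \<and> \<not> E (gen v) (gen x)"
      using H tr[OF e1(2) sy[OF e1(3)]] by (auto simp: eq1 inS2)
    obtain k where k: "E (gen k) (gen u @ gen v @ gen b) \<or> E (gen v) (gen x @ gen k)"
      using h[unfolded cond3_def, rule_format, OF hyp] by blast
    have i: "E (gen k) (gen u @ gen v @ gen b) \<longleftrightarrow> E (gen k) (gen t2 @ gen b)"
      by (rule rr[OF eqG.refl eqG_congL[OF e1(1), of "gen b", simplified]])
    show "\<exists>k. (t2,b,k)\<in>T \<or> (x,k,v)\<in>T" using k unfolding i tab' by blast
  qed
next
  assume h: "Q3 T"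
  show "cond3 R" unfolding cond3_def
  proof (intro allI impI)
    fix u x v b c
    assume H: "inS R (gen u @ gen x) \<and> inS R (gen u @ gen v) \<and>
     E (gen v @ gen b) (gen x @ gen c) \<and> inS R (gen v @ gen b) \<and> \<not> E (gen v) (gen x)"
    obtain t1 where T1: "(u,x,t1)\<in>T" using H inS2 by blast
    obtain t2 where T2: "(u,v,t2)\<in>T" using H inS2 by blast
    obtain s where T3: "(v,b,s)\<in>T" using H inS2 by blast
    have e1: "E (gen u @ gen v) (gen t2)" using T2 tab by blast
    have e2: "E (gen v @ gen b) (gen s)" using T3 tab by blast
    have T4: "(x,c,s)\<in>T" using tr[OF sy[of "gen v @ gen b"] e2] H tab by blast
    have "v \<noteq> x" using H eq1 by auto
    then obtain k where k: "(t2,b,k)\<in>T \<or> (x,k,v)\<in>T"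
      using h[unfolded Q3_def, rule_format, of u x t1 v t2 b s c] T1 T2 T3 T4 by blast
    have i: "E (gen k) (gen u @ gen v @ gen b) \<longleftrightarrow> E (gen k) (gen t2 @ gen b)"
      by (rule rr[OF eqG.refl eqG_congL[OF e1, of "gen b", simplified]])
    show "\<exists>k. E (gen k) (gen u @ gen v @ gen b) \<or> E (gen v) (gen x @ gen k)"
      using k by (intro exI[of _ k]) (simp add: i tab')
  qed
qed

lemma C4: "cond4 R \<longleftrightarrow> Q4 T"
proof
  assume h: "cond4 R"
  show "Q4 T" unfolding Q4_def
  proof (intro allI impI)
    fix v w x d a t1 t2 s
    assume H: "(v,w,t1)\<in>T \<and> (x,w,t2)\<in>T \<and> (d,x,s)\<in>T \<and> (a,v,s)\<in>T \<and> v\<noteq>x"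
    have e1: "E (gen d @ gen x) (gen s)" "E (gen a @ gen v) (gen s)"
      using H tab by auto
    have hyp: "inS R (gen v @ gen w) \<and> inS R (gen x @ gen w) \<and>
     E (gen d @ gen x) (gen a @ gen v) \<and> inS R (gen d @ gen x) \<and> \<not> E (gen v) (gen x)"
      using H tr[OF e1(1) sy[OF e1(2)]] by (auto simp: eq1 inS2)
    obtain k where k: "E (gen k) (gen a @ gen v @ gen w) \<or> E (gen x) (gen k @ gen v)"
      using h[unfolded cond4_def, rule_format, OF hyp] by blast
    have i: "E (gen k) (gen a @ gen v @ gen w) \<longleftrightarrow> E (gen k) (gen s @ gen w)"
      by (rule rr[OF eqG.refl eqG_congL[OF e1(2), of "gen w", simplified]])
    show "\<exists>k. (s,w,k)\<in>T \<or> (k,v,x)\<in>T" using k unfolding i tab' by blast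
  qed
next
  assume h: "Q4 T"
  show "cond4 R" unfolding cond4_def
  proof (intro allI impI)
    fix v w x d a
    assume H: "inS R (gen v @ gen w) \<and> inS R (gen x @ gen w) \<and>
     E (gen d @ gen x) (gen a @ gen v) \<and> inS R (gen d @ gen x) \<and> \<not> E (gen v) (gen x)"
    obtain t1 where T1: "(v,w,t1)\<in>T" using H inS2 by blast
    obtain t2 where T2: "(x,w,t2)\<in>T" using H inS2 by blast
    obtain s where T3: "(d,x,s)\<in>T" using H inS2 by blast
    have e1: "E (gen d @ gen x) (gen s)" using T3 tab by blast
    have T4: "(a,v,s)\<in>T" using tr[OF sy[of "gen d @ gen x"] e1] H tab by blast
    have e2: "E (gen a @ gen v) (gen s)" using T4 tab by blast
    have "v \<noteq> x" using H eq1 by auto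
    then obtain k where k: "(s,w,k)\<in>T \<or> (k,v,x)\<in>T"
      using h[unfolded Q4_def, rule_format, of v w t1 x t2 d s a] T1 T2 T3 T4 by blast
    have i: "E (gen k) (gen a @ gen v @ gen w) \<longleftrightarrow> E (gen k) (gen s @ gen w)"
      by (rule rr[OF eqG.refl eqG_congL[OF e2, of "gen w", simplified]])
    show "\<exists>k. E (gen k) (gen a @ gen v @ gen w) \<or> E (gen x) (gen k @ gen v)"
      using k by (intro exI[of _ k]) (simp add: i tab')
  qed
qed

lemma C5: "cond5 R \<longleftrightarrow> Q5 T"
proof
  assume h: "cond5 R"
  show "Q5 T" unfolding Q5_def
  proof (intro allI impI)
    fix w v x u t1 t2 t3 t4
    assume H: "(w,v,t1)\<in>T \<and> (w,x,t2)\<in>T \<and> (u,v,t3)\<in>T \<and> (u,x,t4)\<in>T \<and> v\<noteq>x \<and> u\<noteq>w"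
    have hyp: "inS R (gen w @ gen v) \<and> inS R (gen w @ gen x) \<and>
     inS R (gen u @ gen v) \<and> inS R (gen u @ gen x) \<and>
     \<not> E (gen v) (gen x) \<and> \<not> E (gen u) (gen w)"
      using H by (auto simp: eq1 inS2)
    obtain k where k: "E (gen w) (gen k @ gen u) \<or> E (gen x) (gen v @ gen k)"
      using h[unfolded cond5_def, rule_format, OF hyp] by blast
    show "\<exists>k. (k,u,w)\<in>T \<or> (v,k,x)\<in>T" using k unfolding tab' by blast
  qed
next
  assume h: "Q5 T"
  show "cond5 R" unfolding cond5_def
  proof (intro allI impI)
    fix w v x u
    assume H: "inS R (gen w @ gen v) \<and> inS R (gen w @ gen x) \<and>
     inS R (gen u @ gen v) \<and> inS R (gen u @ gen x) \<and>
     \<not> E (gen v) (gen x) \<and> \<not> E (gen u) (gen w)"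
    obtain t1 where T1: "(w,v,t1)\<in>T" using H inS2 by blast
    obtain t2 where T2: "(w,x,t2)\<in>T" using H inS2 by blast
    obtain t3 where T3: "(u,v,t3)\<in>T" using H inS2 by blast
    obtain t4 where T4: "(u,x,t4)\<in>T" using H inS2 by blast
    have "v \<noteq> x" "u \<noteq> w" using H eq1 by auto
    then obtain k where k: "(k,u,w)\<in>T \<or> (v,k,x)\<in>T"
      using h[unfolded Q5_def, rule_format, of w v t1 x t2 u t3 t4] T1 T2 T3 T4 by blast
    show "\<exists>k. E (gen w) (gen k @ gen u) \<or> E (gen x) (gen v @ gen k)"
      using k by (intro exI[of _ k]) (simp add: tab')
  qed
qed

end

lemma all_letter: "(\<forall>x::letter. P x) \<longleftrightarrow> P A \<and> P B \<and> P C \<and> P D \<and> P U \<and> P V \<and> P W \<and> P X"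
  by (metis letter.exhaust)

lemmas cs = nf_def gen_def ginv_def Phi1_def winv_def rinv_def


fun phi1 :: "letter \<Rightarrow> letter word" where
  "phi1 A = [(U,False),(W,True),(B,True)]"
| "phi1 B = [(B,True)]"
| "phi1 C = [(C,True)]"
| "phi1 D = [(U,False),(W,True),(C,True)]"
| "phi1 U = [(U,True)]"
| "phi1 V = [(W,True),(B,True)]"
| "phi1 W = [(W,True)]"
| "phi1 X = [(W,True),(C,True)]"

definition "T1 = {(U,A,V),(U,D,X),(W,B,V),(W,C,X)}"


lemma g1c1: "\<forall>p q. nf phi1 (gen p) = nf phi1 (gen q) \<longrightarrow> p = q"
  by (simp add: all_letter cs)
lemma g1c2: "\<forall>p q r. nf phi1 (gen p @ gen q) = nf phi1 (gen r) \<longrightarrow> (p,q,r) \<in> T1"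
  by (simp add: all_letter cs T1_def)
lemma g1c3: "\<forall>s t. nf phi1 (gen s) \<noteq> nf phi1 (ginv t)"
  by (simp add: all_letter cs)
lemma g1c4: "\<forall>a b c. nf phi1 (gen a @ gen b @ gen c) \<noteq> []"
  by (simp add: all_letter cs)
lemma g1c5: "\<forall>a b c s. nf phi1 (gen a @ gen b @ gen c) \<noteq> nf phi1 (gen s)"
  by (simp add: all_letter cs)

interpretation g1: grp R1 T1 phi1
proof
  show "R1 = {rel3 p q r |p q r. (p,q,r)\<in>T1}" by (auto simp: R1_def T1_def)
  show "\<forall>r\<in>R1. \<forall>l. reduced l \<longrightarrow> ev (Phi phi1 r) l = l" by (simp add: R1_def rel3_def cs)
qed (use g1c1 g1c2 g1c3 g1c4 g1c5 in blast)+


lemma g1nQ1: "\<not> Q1 T1"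
  unfolding Q1_def
  apply (rule notI)
  apply (drule spec[of _ U], drule spec[of _ A], drule spec[of _ W], drule spec[of _ B], drule spec[of _ D], drule spec[of _ C], drule spec[of _ V], drule spec[of _ X])
  apply (simp add: T1_def)
  done

lemma g1Q2: "Q2 T1" unfolding Q2_def T1_def by auto

lemma g1Q3: "Q3 T1" unfolding Q3_def T1_def by auto

lemma g1Q4: "Q4 T1" unfolding Q4_def T1_def by auto

lemma g1Q5: "Q5 T1" unfolding Q5_def T1_def by auto

fun phi2 :: "letter \<Rightarrow> letter word" where
  "phi2 A = [(A,True)]"
| "phi2 B = [(B,True)]"
| "phi2 C = [(B,True),(V,True),(X,False)]"
| "phi2 D = [(A,True),(V,True),(X,False)]"
| "phi2 U = [(A,True),(V,True)]"
| "phi2 V = [(V,True)]"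
| "phi2 W = [(B,True),(V,True)]"
| "phi2 X = [(X,True)]"

definition "T2 = {(A,V,U),(B,V,W),(C,X,W),(D,X,U)}"


lemma g2c1: "\<forall>p q. nf phi2 (gen p) = nf phi2 (gen q) \<longrightarrow> p = q"
  by (simp add: all_letter cs)
lemma g2c2: "\<forall>p q r. nf phi2 (gen p @ gen q) = nf phi2 (gen r) \<longrightarrow> (p,q,r) \<in> T2"
  by (simp add: all_letter cs T2_def)
lemma g2c3: "\<forall>s t. nf phi2 (gen s) \<noteq> nf phi2 (ginv t)"
  by (simp add: all_letter cs)
lemma g2c4: "\<forall>a b c. nf phi2 (gen a @ gen b @ gen c) \<noteq> []"
  by (simp add: all_letter cs)
lemma g2c5: "\<forall>a b c s. nf phi2 (gen a @ gen b @ gen c) \<noteq> nf phi2 (gen s)"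
  by (simp add: all_letter cs)

interpretation g2: grp R2 T2 phi2
proof
  show "R2 = {rel3 p q r |p q r. (p,q,r)\<in>T2}" by (auto simp: R2_def T2_def)
  show "\<forall>r\<in>R2. \<forall>l. reduced l \<longrightarrow> ev (Phi phi2 r) l = l" by (simp add: R2_def rel3_def cs)
qed (use g2c1 g2c2 g2c3 g2c4 g2c5 in blast)+


lemma g2Q1: "Q1 T2" unfolding Q1_def T2_def by auto

lemma g2nQ2: "\<not> Q2 T2"
  unfolding Q2_def
  apply (rule notI)
  apply (drule spec[of _ B], drule spec[of _ V], drule spec[of _ C], drule spec[of _ X], drule spec[of _ A], drule spec[of _ D], drule spec[of _ W], drule spec[of _ U])
  apply (simp add: T2_def)
  done

lemma g2Q3: "Q3 T2" unfolding Q3_def T2_def by auto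

lemma g2Q4: "Q4 T2" unfolding Q4_def T2_def by auto

lemma g2Q5: "Q5 T2" unfolding Q5_def T2_def by auto

fun phi3 :: "letter \<Rightarrow> letter word" where
  "phi3 A = [(U,True),(V,True)]"
| "phi3 B = [(B,True)]"
| "phi3 C = [(X,False),(V,True),(B,True)]"
| "phi3 D = [(U,True),(X,True)]"
| "phi3 U = [(U,True)]"
| "phi3 V = [(V,True)]"
| "phi3 W = [(V,True),(B,True)]"
| "phi3 X = [(X,True)]"

definition "T3 = {(U,V,A),(U,X,D),(V,B,W),(X,C,W)}"


lemma g3c1: "\<forall>p q. nf phi3 (gen p) = nf phi3 (gen q) \<longrightarrow> p = q"
  by (simp add: all_letter cs)
lemma g3c2: "\<forall>p q r. nf phi3 (gen p @ gen q) = nf phi3 (gen r) \<longrightarrow> (p,q,r) \<in> T3"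
  by (simp add: all_letter cs T3_def)
lemma g3c3: "\<forall>s t. nf phi3 (gen s) \<noteq> nf phi3 (ginv t)"
  by (simp add: all_letter cs)
lemma g3c4: "\<forall>a b c. nf phi3 (gen a @ gen b @ gen c) \<noteq> []"
  by (simp add: all_letter cs)
lemma g3c5: "\<forall>a b c s. nf phi3 (gen a @ gen b @ gen c) \<noteq> nf phi3 (gen s)"
  by (simp add: all_letter cs)

interpretation g3: grp R3 T3 phi3
proof
  show "R3 = {rel3 p q r |p q r. (p,q,r)\<in>T3}" by (auto simp: R3_def T3_def)
  show "\<forall>r\<in>R3. \<forall>l. reduced l \<longrightarrow> ev (Phi phi3 r) l = l" by (simp add: R3_def rel3_def cs)
qed (use g3c1 g3c2 g3c3 g3c4 g3c5 in blast)+


lemma g3Q1: "Q1 T3" unfolding Q1_def T3_def by auto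

lemma g3Q2: "Q2 T3" unfolding Q2_def T3_def by auto

lemma g3nQ3: "\<not> Q3 T3"
  unfolding Q3_def
  apply (rule notI)
  apply (drule spec[of _ U], drule spec[of _ X], drule spec[of _ V], drule spec[of _ B], drule spec[of _ C], drule spec[of _ D], drule spec[of _ A], drule spec[of _ W])
  apply (simp add: T3_def)
  done

lemma g3Q4: "Q4 T3" unfolding Q4_def T3_def by auto

lemma g3Q5: "Q5 T3" unfolding Q5_def T3_def by auto

fun phi4 :: "letter \<Rightarrow> letter word" where
  "phi4 A = [(D,True),(X,True),(V,False)]"
| "phi4 B = [(V,True),(W,True)]"
| "phi4 C = [(X,True),(W,True)]"
| "phi4 D = [(D,True)]"
| "phi4 U = [(D,True),(X,True)]"
| "phi4 V = [(V,True)]"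
| "phi4 W = [(W,True)]"
| "phi4 X = [(X,True)]"

definition "T4 = {(A,V,U),(D,X,U),(V,W,B),(X,W,C)}"


lemma g4c1: "\<forall>p q. nf phi4 (gen p) = nf phi4 (gen q) \<longrightarrow> p = q"
  by (simp add: all_letter cs)
lemma g4c2: "\<forall>p q r. nf phi4 (gen p @ gen q) = nf phi4 (gen r) \<longrightarrow> (p,q,r) \<in> T4"
  by (simp add: all_letter cs T4_def)
lemma g4c3: "\<forall>s t. nf phi4 (gen s) \<noteq> nf phi4 (ginv t)"
  by (simp add: all_letter cs)
lemma g4c4: "\<forall>a b c. nf phi4 (gen a @ gen b @ gen c) \<noteq> []"
  by (simp add: all_letter cs)
lemma g4c5: "\<forall>a b c s. nf phi4 (gen a @ gen b @ gen c) \<noteq> nf phi4 (gen s)"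
  by (simp add: all_letter cs)

interpretation g4: grp R4 T4 phi4
proof
  show "R4 = {rel3 p q r |p q r. (p,q,r)\<in>T4}" by (auto simp: R4_def T4_def)
  show "\<forall>r\<in>R4. \<forall>l. reduced l \<longrightarrow> ev (Phi phi4 r) l = l" by (simp add: R4_def rel3_def cs)
qed (use g4c1 g4c2 g4c3 g4c4 g4c5 in blast)+


lemma g4Q1: "Q1 T4" unfolding Q1_def T4_def by auto

lemma g4Q2: "Q2 T4" unfolding Q2_def T4_def by auto

lemma g4Q3: "Q3 T4" unfolding Q3_def T4_def by auto

lemma g4nQ4: "\<not> Q4 T4"
  unfolding Q4_def
  apply (rule notI)
  apply (drule spec[of _ V], drule spec[of _ W], drule spec[of _ X], drule spec[of _ D], drule spec[of _ A], drule spec[of _ B], drule spec[of _ C], drule spec[of _ U])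
  apply (simp add: T4_def)
  done

lemma g4Q5: "Q5 T4" unfolding Q5_def T4_def by auto

fun phi5 :: "letter \<Rightarrow> letter word" where
  "phi5 A = [(V,True),(U,True)]"
| "phi5 B = [(V,True),(W,True)]"
| "phi5 C = [(X,True),(W,True)]"
| "phi5 D = [(X,True),(U,True)]"
| "phi5 U = [(U,True)]"
| "phi5 V = [(V,True)]"
| "phi5 W = [(W,True)]"
| "phi5 X = [(X,True)]"

definition "T5 = {(V,U,A),(V,W,B),(X,U,D),(X,W,C)}"


lemma g5c1: "\<forall>p q. nf phi5 (gen p) = nf phi5 (gen q) \<longrightarrow> p = q"
  by (simp add: all_letter cs)
lemma g5c2: "\<forall>p q r. nf phi5 (gen p @ gen q) = nf phi5 (gen r) \<longrightarrow> (p,q,r) \<in> T5"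
  by (simp add: all_letter cs T5_def)
lemma g5c3: "\<forall>s t. nf phi5 (gen s) \<noteq> nf phi5 (ginv t)"
  by (simp add: all_letter cs)
lemma g5c4: "\<forall>a b c. nf phi5 (gen a @ gen b @ gen c) \<noteq> []"
  by (simp add: all_letter cs)
lemma g5c5: "\<forall>a b c s. nf phi5 (gen a @ gen b @ gen c) \<noteq> nf phi5 (gen s)"
  by (simp add: all_letter cs)

interpretation g5: grp R5 T5 phi5
proof
  show "R5 = {rel3 p q r |p q r. (p,q,r)\<in>T5}" by (auto simp: R5_def T5_def)
  show "\<forall>r\<in>R5. \<forall>l. reduced l \<longrightarrow> ev (Phi phi5 r) l = l" by (simp add: R5_def rel3_def cs)
qed (use g5c1 g5c2 g5c3 g5c4 g5c5 in blast)+


lemma g5Q1: "Q1 T5" unfolding Q1_def T5_def by auto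

lemma g5Q2: "Q2 T5" unfolding Q2_def T5_def by auto

lemma g5Q3: "Q3 T5" unfolding Q3_def T5_def by auto

lemma g5Q4: "Q4 T5" unfolding Q4_def T5_def by auto

lemma g5nQ5: "\<not> Q5 T5"
  unfolding Q5_def
  apply (rule notI)
  apply (drule spec[of _ V], drule spec[of _ U], drule spec[of _ W], drule spec[of _ X], drule spec[of _ A], drule spec[of _ B], drule spec[of _ D], drule spec[of _ C])
  apply (simp add: T5_def)
  done

theorem mainTheorem7:
  shows "(restricted_triangular R1 \<and> \<not> cond1 R1 \<and> cond2 R1 \<and> cond3 R1 \<and> cond4 R1 \<and> cond5 R1) \<and>
         (restricted_triangular R2 \<and> cond1 R2 \<and> \<not> cond2 R2 \<and> cond3 R2 \<and> cond4 R2 \<and> cond5 R2) \<and>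
         (restricted_triangular R3 \<and> cond1 R3 \<and> cond2 R3 \<and> \<not> cond3 R3 \<and> cond4 R3 \<and> cond5 R3) \<and>
         (restricted_triangular R4 \<and> cond1 R4 \<and> cond2 R4 \<and> cond3 R4 \<and> \<not> cond4 R4 \<and> cond5 R4) \<and>
         (restricted_triangular R5 \<and> cond1 R5 \<and> cond2 R5 \<and> cond3 R5 \<and> cond4 R5 \<and> \<not> cond5 R5)"
  by (simp only: g1.rt g1.C1 g1nQ1 g1.C2 g1Q2 g1.C3 g1Q3 g1.C4 g1Q4 g1.C5 g1Q5 g2.rt g2.C1 g2Q1 g2.C2 g2nQ2 g2.C3 g2Q3 g2.C4 g2Q4 g2.C5 g2Q5 g3.rt g3.C1 g3Q1 g3.C2 g3Q2 g3.C3 g3nQ3 g3.C4 g3Q4 g3.C5 g3Q5 g4.rt g4.C1 g4Q1 g4.C2 g4Q2 g4.C3 g4Q3 g4.C4 g4nQ4 g4.C5 g4Q5 g5.rt g5.C1 g5Q1 g5.C2 g5Q2 g5.C3 g5Q3 g5.C4 g5Q4 g5.C5 g5nQ5 simp_thms)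

end
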